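(* Let $\mathcal{C}_1$ be an $[n,k_1,d_1]_2$ binary linear code that is even-like, let $\mathcal{C}_2$ be the $[n,1,n]_2$ repetition code generated by the all-ones vector $\mathbf{1}_n$, and let $\mathcal{C}=\{(\mathbf{u},\mathbf{u}+\mathbf{v}):\ \mathbf{u}\in\mathcal{C}_1,\ \mathbf{v}\in\mathcal{C}_2\}$. Then $\mathcal{C}$ is a $[2n,k_1+1,\min\{2d_1,n\}]_2$ code with $\dim(\mathrm{Hull}_E(\mathcal{C}))=k_1$ if $n$ is odd and $\dim(\mathrm{Hull}_E(\mathcal{C}))=k_1+1$ if $n$ is even.
   Context: A vector $\mathbf{x}\in\mathbb{F}_2^n$ is even-like if $\sum_i x_i=0$ and odd-like otherwise; a binary code is even-like if all its codewords are even-like, and odd-like otherwise. $\mathrm{Hull}_E(\mathcal{C})=\mathcal{C}\cap\mathcal{C}^{\perp_E}$ where $\mathcal{C}^{\perp_E}$ is the dual with respect to $(\mathbf{x},\mathbf{y})_E=\sum_ix_iy_i$. An $[n,k,d]_2$ code is a $k$-dimensional subspace of $\mathbb{F}_2^n$ with minimum distance $d$. *)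

theory Defs
  imports "HOL-Analysis.Analysis" "HOL-Library.Z2"
begin

text \<open>Binary vectors of length n are elements of bit^'n with CARD('n) = n.
  A binary linear code is a linear subspace (over the field bit = F_2).\<close>

definition bin_linear_code :: "(bit ^ 'n) set \<Rightarrow> bool" where
  "bin_linear_code C \<longleftrightarrow> vec.subspace C"

definition hweight :: "bit ^ 'n \<Rightarrow> nat" where
  "hweight x = card {i. x $ i \<noteq> 0}"

definition min_dist :: "(bit ^ 'n) set \<Rightarrow> nat" where
  "min_dist C = Min (hweight ` (C - {0}))"

definition even_like_vec :: "bit ^ 'n \<Rightarrow> bool" where
  "even_like_vec x \<longleftrightarrow> (\<Sum>i\<in>UNIV. x $ i) = 0"

definition even_like_code :: "(bit ^ 'n) set \<Rightarrow> bool" where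
  "even_like_code C \<longleftrightarrow> (\<forall>x\<in>C. even_like_vec x)"

definition euclid_ip :: "bit ^ 'n \<Rightarrow> bit ^ 'n \<Rightarrow> bit" where
  "euclid_ip x y = (\<Sum>i\<in>UNIV. x $ i * y $ i)"

definition euclid_dual :: "(bit ^ 'n) set \<Rightarrow> (bit ^ 'n) set" where
  "euclid_dual C = {y. \<forall>x\<in>C. euclid_ip x y = 0}"

definition hull_E :: "(bit ^ 'n) set \<Rightarrow> (bit ^ 'n) set" where
  "hull_E C = C \<inter> euclid_dual C"

definition all_ones :: "bit ^ 'n" where
  "all_ones = (\<chi> i. 1)"

definition concat_vec :: "bit ^ 'n \<Rightarrow> bit ^ 'n \<Rightarrow> bit ^ ('n + 'n)" where
  "concat_vec u w = (\<chi> i. case i of Inl j \<Rightarrow> u $ j | Inr j \<Rightarrow> w $ j)"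

definition u_uv :: "(bit ^ 'n) set \<Rightarrow> (bit ^ 'n) set \<Rightarrow> (bit ^ ('n + 'n)) set" where
  "u_uv C1 C2 = {concat_vec u (u + v) | u v. u \<in> C1 \<and> v \<in> C2}"

end

theory Submission
  imports Defs
begin

lemma bit_add_self[simp]: "(x::bit) + x = 0" by (cases x) simp_all
lemma UNIV_bit: "(UNIV::bit set) = {0,1}" using bit_not_zero_iff by blast
lemma bit_minus: "(x::bit) - y = x + y" by (cases x; cases y) simp_all
lemma of_nat_bit: "(of_nat n :: bit) = (if even n then 0 else 1)"
  by (induction n) auto

lemma concat_add: "concat_vec a b + concat_vec c d = concat_vec (a+c) (b+d)"
  by (simp add: concat_vec_def vec_eq_iff split: sum.split)
lemma concat_smult: "k *s concat_vec a b = concat_vec (k *s a) (k *s b)"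
  by (simp add: concat_vec_def vec_eq_iff split: sum.split)
lemma concat_zero: "concat_vec 0 0 = 0"
  by (simp add: concat_vec_def vec_eq_iff split: sum.split)
lemma concat_inj: "concat_vec a b = concat_vec c d \<longleftrightarrow> a = c \<and> b = d"
  by (auto simp add: concat_vec_def vec_eq_iff split: sum.split)

lemma sum_Plus_UNIV:
  fixes f :: "'a + 'b \<Rightarrow> 'c::comm_monoid_add"
  assumes "finite (UNIV::'a set)" "finite (UNIV::'b set)"
  shows "(\<Sum>i\<in>UNIV. f i) = (\<Sum>i\<in>UNIV. f (Inl i)) + (\<Sum>i\<in>UNIV. f (Inr i))"
  using sum.Plus[OF assms, of f] by (simp add: UNIV_Plus_UNIV comp_def)

lemma ip_concat:
  "euclid_ip (concat_vec a b) (concat_vec c (d :: bit ^ 'n)) = euclid_ip a c + euclid_ip b d"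
  unfolding euclid_ip_def
  by (subst sum_Plus_UNIV) (simp_all add: concat_vec_def)

lemma ip_add_left: "euclid_ip (x + y) z = euclid_ip x z + euclid_ip y z"
  unfolding euclid_ip_def by (simp add: sum.distrib distrib_right del: add_bit_eq_xor mult_bit_eq_and)
lemma ip_comm: "euclid_ip x y = euclid_ip y x"
  unfolding euclid_ip_def by (simp add: mult.commute del: add_bit_eq_xor mult_bit_eq_and)
lemma ip_add_right: "euclid_ip z (x + y) = euclid_ip z x + euclid_ip z y"
  by (metis ip_add_left ip_comm)
lemma ip_zero: "euclid_ip 0 x = 0"
  unfolding euclid_ip_def by simp
lemma ip_self2: "euclid_ip u u + euclid_ip u u = 0"
  by (rule bit_add_self)
lemma ip_ones: "even_like_vec u \<Longrightarrow> euclid_ip u all_ones = 0"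
  unfolding euclid_ip_def even_like_vec_def all_ones_def by (simp only: vec_lambda_beta mult_1_right)
lemma ones_ones: "euclid_ip (all_ones :: bit ^ 'n) all_ones = of_nat CARD('n)"
  unfolding euclid_ip_def all_ones_def by simp

lemma hweight_concat: "hweight (concat_vec a (b :: bit ^ 'n)) = hweight a + hweight b"
proof -
  have "{i. concat_vec a b $ i \<noteq> 0} = {j. a $ j \<noteq> 0} <+> {j. b $ j \<noteq> 0}"
    apply (rule set_eqI) subgoal for x by (cases x) (auto simp: concat_vec_def)
    done
  then show ?thesis unfolding hweight_def by (simp add: card_Plus)
qed

lemma hweight_compl: "hweight u + hweight (u + all_ones) = CARD('n)" for u :: "bit ^ 'n"
proof -
  have "{i. (u + all_ones) $ i \<noteq> 0} = - {i. u $ i \<noteq> 0}"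
    by (auto simp: all_ones_def)
  moreover have "card {i. u $ i \<noteq> 0} + card (- {i. u $ i \<noteq> 0}) = CARD('n)"
    by (metis (no_types, lifting) Compl_partition card_Un_disjoint finite disjoint_iff_not_equal ComplD)
  ultimately show ?thesis unfolding hweight_def by simp
qed

lemma hweight_zero: "hweight x = 0 \<longleftrightarrow> x = (0 :: bit ^ 'n)"
  unfolding hweight_def by (auto simp: vec_eq_iff)

lemma hweight_le: "hweight (x :: bit ^ 'n) \<le> CARD('n)"
  unfolding hweight_def by (rule card_mono) auto

lemma lin_L: "Vector_Spaces.linear (*s) (*s) (\<lambda>u::bit^'n. concat_vec u u)"
  by unfold_locales (simp_all add: concat_add concat_smult)

lemma span1: "vec.span {all_ones :: bit ^ 'n} = {0, all_ones}"
  unfolding vec.span_singleton UNIV_bit by simp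

theorem theorem3:
  fixes C1 :: "(bit ^ 'n) set" and k1 d1 :: nat
  assumes "bin_linear_code C1"
    and "vec.dim C1 = k1"
    and "C1 \<noteq> {0}"
    and "min_dist C1 = d1"
    and "even_like_code C1"
  shows "bin_linear_code (u_uv C1 (vec.span {all_ones}))
     \<and> CARD('n + 'n) = 2 * CARD('n)
     \<and> vec.dim (u_uv C1 (vec.span {all_ones})) = k1 + 1
     \<and> min_dist (u_uv C1 (vec.span {all_ones})) = min (2 * d1) CARD('n)
     \<and> (odd CARD('n) \<longrightarrow> vec.dim (hull_E (u_uv C1 (vec.span {all_ones}))) = k1)
     \<and> (even CARD('n) \<longrightarrow> vec.dim (hull_E (u_uv C1 (vec.span {all_ones}))) = k1 + 1)"
proof -
  define L where "L = (\<lambda>u::bit^'n. concat_vec u u)"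
  define c where "c = concat_vec (0::bit^'n) all_ones"
  define C where "C = u_uv C1 (vec.span {all_ones})"
  have sub1: "vec.subspace C1" using assms(1) by (simp add: bin_linear_code_def)
  have z1: "0 \<in> C1" using sub1 vec.subspace_0 by blast
  have ev: "\<And>u. u \<in> C1 \<Longrightarrow> even_like_vec u" using assms(5) by (simp add: even_like_code_def)
  have Lc: "L u + c = concat_vec u (u + all_ones)" for u
    unfolding L_def c_def by (simp add: concat_add)
  have Cdesc: "C = L ` C1 \<union> (\<lambda>u. L u + c) ` C1"
    unfolding C_def u_uv_def span1 Lc by (auto simp: L_def) (metis add.right_neutral)
  have subL: "vec.subspace (L ` C1)"
    unfolding vec.subspace_def
  proof (intro conjI ballI allI)
    show "0 \<in> L ` C1" using z1 by (auto simp: L_def concat_zero intro!: image_eqI[of _ _ 0])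
  next
    fix x y assume "x \<in> L ` C1" "y \<in> L ` C1"
    then obtain a b where "a \<in> C1" "b \<in> C1" "x = L a" "y = L b" by auto
    then show "x + y \<in> L ` C1" using sub1 vec.subspace_add
      by (auto simp: L_def concat_add intro!: image_eqI[of _ _ "a+b"])
  next
    fix k x assume "x \<in> L ` C1"
    then obtain a where "a \<in> C1" "x = L a" by auto
    then show "k *s x \<in> L ` C1" using sub1 vec.subspace_scale
      by (auto simp: L_def concat_smult intro!: image_eqI[of _ _ "k *s a"])
  qed
  have spanL: "vec.span (L ` C1) = L ` C1" using subL vec.span_eq_iff by blast
  have ones_nz: "all_ones \<noteq> (0::bit^'n)" by (simp add: all_ones_def vec_eq_iff)
  have cnot: "c \<notin> L ` C1"
    using ones_nz by (auto simp: L_def c_def concat_inj)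
  have vminus: "x - y = x + y" for x y :: "bit ^ ('n + 'n)"
    by (simp add: vec_eq_iff bit_minus del: add_bit_eq_xor)
  have Cspan: "C = vec.span (insert c (L ` C1))"
    unfolding vec.span_insert spanL
  proof (intro set_eqI iffI)
    fix x assume "x \<in> C"
    then consider "x \<in> L ` C1" | u where "u \<in> C1" "x = L u + c" unfolding Cdesc by blast
    then show "x \<in> {x. \<exists>k. x - k *s c \<in> L ` C1}"
    proof cases
      case 1 then show ?thesis by (intro CollectI exI[of _ 0]) simp
    next
      case 2
      have vself: "c + c = 0" by (simp add: vec_eq_iff del: add_bit_eq_xor)
      have "x - 1 *s c = L u" using 2 by (simp only: vec.scale_one vminus add.assoc vself add_0_right)
      then show ?thesis using 2 by blast
    qed
  next
    fix x assume "x \<in> {x. \<exists>k. x - k *s c \<in> L ` C1}"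
    then obtain k u where u: "u \<in> C1" "x - k *s c = L u" by blast
    show "x \<in> C"
    proof (cases k)
      case zero then show ?thesis using u unfolding Cdesc by auto
    next
      case one
      then have "x = L u + c" using u by (simp add: vminus) (metis add.assoc add.right_neutral bit_add_self vminus diff_add_cancel)
      then show ?thesis using u unfolding Cdesc by auto
    qed
  qed
  have dimL: "vec.dim (L ` C1) = k1"
  proof -
    have "inj_on L (vec.span C1)" by (auto simp: inj_on_def L_def concat_inj)
    then show ?thesis using vec.dim_image_eq[OF lin_L, of C1] assms(2) unfolding L_def by simp
  qed
  have dimC: "vec.dim C = k1 + 1"
    unfolding Cspan vec.dim_span vec.dim_insert spanL using cnot dimL by simp
  have subC: "vec.subspace C" unfolding Cspan by (rule vec.subspace_span)
  have card2: "CARD('n + 'n) = 2 * CARD('n)"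
    by (simp add: UNIV_Plus_UNIV[symmetric] card_Plus del: UNIV_Plus_UNIV)
  have ipLL: "euclid_ip (L u) (L v) = 0" for u v
    unfolding L_def ip_concat by simp
  have ipLc: "u \<in> C1 \<Longrightarrow> euclid_ip (L u) c = 0" for u
    unfolding L_def c_def ip_concat by (simp add: ip_ones ev ip_comm[of u 0] ip_zero)
  have ipcL: "u \<in> C1 \<Longrightarrow> euclid_ip c (L u) = 0" for u
    using ipLc ip_comm by metis
  have ipcc: "euclid_ip c c = of_nat CARD('n)"
    unfolding c_def ip_concat ones_ones by (simp add: ip_zero)
  have hullE: "even CARD('n) \<Longrightarrow> hull_E C = C"
  proof -
    assume e: "even CARD('n)"
    have "\<forall>x\<in>C. \<forall>y\<in>C. euclid_ip x y = 0"
      unfolding Cdesc using e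
      by (auto simp: ip_add_left ip_add_right ipLL ipLc ipcL ipcc of_nat_bit)
    then show ?thesis unfolding hull_E_def euclid_dual_def by auto
  qed
  have hullO: "odd CARD('n) \<Longrightarrow> hull_E C = L ` C1"
  proof -
    assume o: "odd CARD('n)"
    have cC: "c \<in> C" unfolding Cdesc using z1
      by (auto simp: L_def concat_zero intro!: image_eqI[of _ _ 0])
    show ?thesis
    proof (intro set_eqI iffI)
      fix x assume x: "x \<in> hull_E C"
      then have xC: "x \<in> C" and "euclid_ip c x = 0" using cC
        by (auto simp: hull_E_def euclid_dual_def ip_comm[of c])
      then show "x \<in> L ` C1" unfolding Cdesc using o
        by (auto simp: ip_add_right ipcL ipcc of_nat_bit)
    next
      fix x assume "x \<in> L ` C1"
      then obtain u where u: "u \<in> C1" "x = L u" by auto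
      have "\<forall>y\<in>C. euclid_ip y x = 0"
        unfolding Cdesc using u by (auto simp: ip_add_left ipLL ipcL)
      moreover have "x \<in> C" unfolding Cdesc using u by auto
      ultimately show "x \<in> hull_E C" unfolding hull_E_def euclid_dual_def by auto
    qed
  qed
  have hwL: "hweight (L u) = 2 * hweight u" for u unfolding L_def hweight_concat by simp
  have hwLc: "hweight (L u + c) = CARD('n)" for u unfolding Lc hweight_concat hweight_compl ..
  have Lz: "L u = 0 \<longleftrightarrow> u = 0" for u
    unfolding L_def concat_zero[symmetric] concat_inj by simp
  have nzC: "C - {0} = L ` (C1 - {0}) \<union> (\<lambda>u. L u + c) ` C1"
  proof -
    have "L u + c \<noteq> 0" for u using hwLc[of u] hweight_zero[of "L u + c"] by auto
    then show ?thesis unfolding Cdesc using Lz by auto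
  qed
  define A where "A = hweight ` (C1 - {0})"
  have hwimg: "hweight ` (C - {0}) = insert CARD('n) ((*) 2 ` A)"
    unfolding nzC image_Un A_def image_image hwL hwLc using z1 by auto
  have Ane: "A \<noteq> {}" unfolding A_def using assms(3) z1 by auto
  have Afin: "finite A"
    by (rule finite_subset[of _ "{..CARD('n)}"]) (auto simp: A_def hweight_le)
  have "min_dist C = min CARD('n) (Min ((*) 2 ` A))"
    unfolding min_dist_def hwimg using Ane Afin by (simp add: Min_insert)
  also have "Min ((*) 2 ` A) = 2 * d1"
    using mono_Min_commute[of "(*) (2::nat)" A] Afin Ane assms(4)
    by (simp add: mono_def min_dist_def A_def)
  finally have md: "min_dist C = min (2 * d1) CARD('n)" by simp
  show ?thesis
    using subC card2 dimC md hullE hullO dimL dimC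
    by (simp add: C_def[symmetric] bin_linear_code_def)
qed

end
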